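(* Let $G$ be a complete $k$-partite graph ($k\ge3$) on $n$ vertices with parts $V_1,\dots,V_k$ and let $w_0$ be any initial weighting. Then for every $1\le i\le k$, $S_{w_0}(i)\le m_i$.
   Context: Robot crawler model: let $G=(V,E)$ be a finite connected simple graph with $|V|=n$. An initial weighting is a bijection $w_0:V\to\{-n,-n+1,\dots,-1\}$. At time $1$ the crawler visits $w_0^{-1}(-n)$. If the crawler visits vertex $v$ at time $t$, then $w_t(v)=t$ and $w_t(u)=w_{t-1}(u)$ for all $u\neq v$. If $\min_{y\in V}w_t(y)>0$, the process stops. Otherwise, at time $t+1$ the crawler moves to the neighbour $u$ of $v$ minimising $w_t(u)$. A vertex is "cleaned" at the first time it is visited. A complete $k$-partite graph with parts $V_1,\dots,V_k$ has an edge between $u$ and $v$ iff they lie in different parts. The surplus $S_{w_0}(i)$ of part $V_i$ is the number of not-yet-cleaned vertices of $V_i$ at the first moment when all vertices of $V\setminus V_i$ have been cleaned (and $0$ if $V_i$ is fully cleaned by then). The quantity $m_i$ is defined by $$m_i=\max\Big\{x\ge 0:\ \exists\, y\ge 0 \text{ with } 2y+x\le n \text{ and } \Big|\bigcup_{j=1}^{2y+x}w_0^{-1}(-j)\cap V_i\Big|=y+x\Big\},$$ i.e. the largest $x$ such that, for some $y\ge0$, exactly $y+x$ of the $2y+x$ cleanest vertices (those with initial weights $-1,\dots,-(2y+x)$) lie in $V_i$. Equivalently, with $X(t)=|\{v\in V_i: w_0(v)\ge -t\}|-|\{v\in V\setminus V_i: w_0(v)\ge -t\}|$, $m_i=\max_{0\le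 t\le n}X(t)$. *)

theory Defs
  imports Main
begin

text \<open>Robot crawler on a graph with vertex set V and adjacency relation E.
  crawl E V w0 t = (w_t, v_t), where w_t is the weighting at time t and v_t is
  the vertex visited at time t (for t \<ge> 1; the second component at t = 0 is
  meaningless). The process is continued
  formally after it stops; this does not affect the quantities below.\<close>

definition crawl_next :: "('a \<Rightarrow> 'a \<Rightarrow> bool) \<Rightarrow> 'a set \<Rightarrow> ('a \<Rightarrow> int) \<Rightarrow> 'a \<Rightarrow> 'a" where
  "crawl_next E V w v = (THE u. u \<in> V \<and> E v u \<and> (\<forall>x\<in>V. E v x \<longrightarrow> w u \<le> w x))"

fun crawl :: "('a \<Rightarrow> 'a \<Rightarrow> bool) \<Rightarrow> 'a set \<Rightarrow> ('a \<Rightarrow> int) \<Rightarrow> nat \<Rightarrow> ('a \<Rightarrow> int) \<times> 'a" where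
  "crawl E V w0 0 = (w0, undefined)"
| "crawl E V w0 (Suc t) =
     (let (w, v) = crawl E V w0 t;
          u = (if t = 0 then (THE x. x \<in> V \<and> w0 x = - int (card V))
               else crawl_next E V w v)
      in (w(u := int (Suc t)), u))"

definition cleaned :: "('a \<Rightarrow> 'a \<Rightarrow> bool) \<Rightarrow> 'a set \<Rightarrow> ('a \<Rightarrow> int) \<Rightarrow> nat \<Rightarrow> 'a set" where
  "cleaned E V w0 t = {snd (crawl E V w0 s) | s. 1 \<le> s \<and> s \<le> t}"

definition surplus :: "('a \<Rightarrow> 'a \<Rightarrow> bool) \<Rightarrow> 'a set \<Rightarrow> ('a \<Rightarrow> int) \<Rightarrow> 'a set \<Rightarrow> nat" where
  "surplus E V w0 Vi =
     (let T = (LEAST t. V - Vi \<subseteq> cleaned E V w0 t)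
      in card (Vi - cleaned E V w0 T))"

definition m_val :: "'a set \<Rightarrow> ('a \<Rightarrow> int) \<Rightarrow> 'a set \<Rightarrow> nat" where
  "m_val V w0 Vi = Max {x. \<exists>y. 2*y + x \<le> card V \<and>
       card ((\<Union>j\<in>{1..2*y+x}. {v\<in>V. w0 v = - int j}) \<inter> Vi) = y + x}"

definition kpartite_adj :: "(nat \<Rightarrow> 'a set) \<Rightarrow> nat \<Rightarrow> 'a \<Rightarrow> 'a \<Rightarrow> bool" where
  "kpartite_adj P k u v = (\<exists>i<k. \<exists>j<k. i \<noteq> j \<and> u \<in> P i \<and> v \<in> P j)"

end

theory Submission
  imports Defs
begin

locale kp =
  fixes V :: "'a set" and P :: "nat \<Rightarrow> 'a set" and k :: nat and w0 :: "'a \<Rightarrow> int"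
  assumes finV: "finite V"
    and k3: "k \<ge> 3"
    and ne: "\<forall>i<k. P i \<noteq> {}"
    and disj: "\<forall>i<k. \<forall>j<k. i \<noteq> j \<longrightarrow> P i \<inter> P j = {}"
    and cover: "(\<Union>i<k. P i) = V"
    and bij: "bij_betw w0 V {- int (card V) .. -1}"
begin

abbreviation "E \<equiv> kpartite_adj P k"
abbreviation "n \<equiv> card V"
definition "W t = fst (crawl E V w0 t)"
definition "c t = snd (crawl E V w0 t)"
definition "C t = cleaned E V w0 t"

lemma crawl_Suc:
  "W (Suc t) = (W t)(c (Suc t) := int (Suc t))"
  "c (Suc t) = (if t = 0 then (THE x. x \<in> V \<and> w0 x = - int n) else crawl_next E V (W t) (c t))"
  unfolding W_def c_def by (cases "crawl E V w0 t"; simp add: Let_def)+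

lemma W0: "W 0 = w0" unfolding W_def by simp

lemma C0: "C 0 = {}" unfolding C_def cleaned_def by auto

lemma C_eq: "C t = {c s | s. 1 \<le> s \<and> s \<le> t}"
  unfolding C_def cleaned_def c_def by auto

lemma CSuc: "C (Suc t) = insert (c (Suc t)) (C t)"
  unfolding C_eq by (auto simp: le_Suc_eq)

lemma C_mono: "t \<le> t' \<Longrightarrow> C t \<subseteq> C t'"
  unfolding C_def cleaned_def by auto

lemma C_iff: "v \<in> C t \<longleftrightarrow> (\<exists>s. 1 \<le> s \<and> s \<le> t \<and> c s = v)"
  unfolding C_eq by auto

lemma injw0: "inj_on w0 V" using bij by (simp add: bij_betw_def)
lemma imw0: "w0 ` V = {- int n .. -1}" using bij by (simp add: bij_betw_def)
lemma w0_range: "v \<in> V \<Longrightarrow> - int n \<le> w0 v \<and> w0 v \<le> -1" using imw0 by auto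

lemma P_sub: "a < k \<Longrightarrow> P a \<subseteq> V" using cover by auto
lemma part_of: "v \<in> V \<Longrightarrow> \<exists>a<k. v \<in> P a" using cover by auto
lemma part_uniq: "a < k \<Longrightarrow> b < k \<Longrightarrow> v \<in> P a \<Longrightarrow> v \<in> P b \<Longrightarrow> a = b"
  using disj by blast

lemma adj: "a < k \<Longrightarrow> v \<in> P a \<Longrightarrow> y \<in> V \<Longrightarrow> E v y \<longleftrightarrow> y \<notin> P a"
  unfolding kpartite_adj_def using part_uniq part_of by metis

lemma other: "a < k \<Longrightarrow> \<exists>q\<in>V. q \<notin> P a"
proof -
  assume a: "a < k"
  define b where "b = (if a = 0 then 1 else 0::nat)"
  have b: "b < k" "b \<noteq> a" using k3 a by (auto simp: b_def)
  then obtain q where "q \<in> P b" using ne by blast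
  then show ?thesis using b a P_sub part_uniq by blast
qed

lemma npos: "n \<ge> 1"
proof -
  have "P 0 \<noteq> {}" "P 0 \<subseteq> V" using ne k3 P_sub by auto
  then show ?thesis using finV by (metis One_nat_def Suc_leI card_gt_0_iff subset_empty)
qed

lemma next_gen:
  assumes "inj_on w V" "a < k" "v \<in> P a"
  shows "\<exists>u\<in>V. u \<notin> P a \<and> (\<forall>x\<in>V. x \<notin> P a \<longrightarrow> w u \<le> w x) \<and> crawl_next E V w v = u"
proof -
  let ?N = "V - P a"
  have fin: "finite ?N" using finV by auto
  have nem: "?N \<noteq> {}" using other[OF assms(2)] by auto
  obtain u where u: "u \<in> ?N" "\<forall>x\<in>?N. w u \<le> w x"
  proof -
    obtain m where m: "m \<in> w ` ?N" "\<not> (\<exists>x\<in>w ` ?N. x < m)"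
      using ex_min_if_finite[of "w ` ?N"] fin nem by blast
    then show ?thesis using that by force
  qed
  have "crawl_next E V w v = u"
    unfolding crawl_next_def
  proof (rule the_equality)
    show "u \<in> V \<and> E v u \<and> (\<forall>x\<in>V. E v x \<longrightarrow> w u \<le> w x)"
      using u adj[OF assms(2,3)] by auto
  next
    fix u' assume h: "u' \<in> V \<and> E v u' \<and> (\<forall>x\<in>V. E v x \<longrightarrow> w u' \<le> w x)"
    then have "u' \<in> ?N" using adj[OF assms(2,3)] by auto
    then have "w u' = w u" using h u adj[OF assms(2,3)] by force
    then show "u' = u" using assms(1) h u by (meson DiffD1 inj_onD)
  qed
  then show ?thesis using u by auto
qed

lemma c1: "c (Suc 0) \<in> V \<and> w0 (c (Suc 0)) = - int n"
proof -
  have "- int n \<in> w0 ` V" using imw0 npos by auto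
  then obtain x where x: "x \<in> V" "w0 x = - int n" by auto
  have "\<exists>!x. x \<in> V \<and> w0 x = - int n" using x injw0 by (metis inj_onD)
  from theI'[OF this] show ?thesis using crawl_Suc(2)[of 0] by simp
qed

lemma inv:
  "(\<forall>v\<in>V. (v \<notin> C t \<longrightarrow> W t v = w0 v) \<and> (v \<in> C t \<longrightarrow> 0 < W t v) \<and> W t v \<le> int t)
   \<and> inj_on (W t) V \<and> (1 \<le> t \<longrightarrow> c t \<in> V)"
proof (induction t)
  case 0
  then show ?case using W0 C0 w0_range injw0 by force
next
  case (Suc t)
  have cin: "c (Suc t) \<in> V"
  proof (cases "t = 0")
    case True then show ?thesis using c1 by simp
  next
    case False
    then have "c t \<in> V" using Suc by simp
    then obtain a where a: "a < k" "c t \<in> P a" using part_of by blast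
    from next_gen[OF _ a, of "W t"] Suc obtain u where "u \<in> V" "crawl_next E V (W t) (c t) = u" by blast
    then show ?thesis using crawl_Suc(2)[of t] False by simp
  qed
  have A: "\<forall>v\<in>V. (v \<notin> C (Suc t) \<longrightarrow> W (Suc t) v = w0 v) \<and> (v \<in> C (Suc t) \<longrightarrow> 0 < W (Suc t) v) \<and> W (Suc t) v \<le> int (Suc t)"
    using Suc.IH unfolding crawl_Suc(1) CSuc by force
  have B: "inj_on (W (Suc t)) V"
  proof (rule inj_onI)
    fix x y assume h: "x \<in> V" "y \<in> V" "W (Suc t) x = W (Suc t) y"
    show "x = y"
    proof (cases "x = c (Suc t) \<or> y = c (Suc t)")
      case True
      then show ?thesis using h Suc.IH unfolding crawl_Suc(1)
        by (smt (verit, ccfv_threshold) fun_upd_apply of_nat_Suc)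
    next
      case False
      then show ?thesis using h Suc.IH unfolding crawl_Suc(1) by (simp add: inj_on_def)
    qed
  qed
  show ?case using A B cin by simp
qed

lemma C_sub: "C t \<subseteq> V"
  using inv unfolding C_eq by auto

lemma dirty_next:
  assumes "1 \<le> t" "a < k" "c t \<in> P a" "q \<in> V" "q \<notin> P a" "q \<notin> C t"
  shows "c (Suc t) \<in> V \<and> c (Suc t) \<notin> C t \<and> c (Suc t) \<notin> P a
    \<and> (\<forall>y\<in>V. y \<notin> C t \<longrightarrow> y \<notin> P a \<longrightarrow> w0 (c (Suc t)) \<le> w0 y)"
proof -
  obtain u where u: "u \<in> V" "u \<notin> P a" "\<forall>x\<in>V. x \<notin> P a \<longrightarrow> W t u \<le> W t x"
     "crawl_next E V (W t) (c t) = u"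
    using next_gen[OF _ assms(2,3), of "W t"] inv[of t] by blast
  have cu: "c (Suc t) = u" using crawl_Suc(2)[of t] assms(1) u(4) by simp
  have "W t q = w0 q" using inv[of t] assms by auto
  then have "W t u < 0" using u(3) assms(4,5) w0_range[OF assms(4)] by force
  then have uC: "u \<notin> C t" using inv[of t] u(1) by force
  then have "W t u = w0 u" using inv[of t] u(1) by auto
  then show ?thesis using cu u uC inv[of t] by fastforce
qed

lemma next_other:
  assumes "1 \<le> t" "a < k" "c t \<in> P a"
  shows "c (Suc t) \<in> V \<and> c (Suc t) \<notin> P a"
proof -
  obtain u where u: "u \<in> V" "u \<notin> P a" "crawl_next E V (W t) (c t) = u"
    using next_gen[OF _ assms(2,3), of "W t"] inv[of t] by blast
  then show ?thesis using crawl_Suc(2)[of t] assms(1) by simp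
qed

lemma progress:
  assumes "1 \<le> t" "\<not> V \<subseteq> C t"
  shows "card (C t) < card (C (Suc (Suc t)))"
proof -
  have fin: "finite (C t')" for t' using C_sub finV finite_subset by blast
  have ct: "c t \<in> V" using inv[of t] assms by simp
  then obtain a where a: "a < k" "c t \<in> P a" using part_of by blast
  show ?thesis
  proof (cases "\<exists>q\<in>V. q \<notin> P a \<and> q \<notin> C t")
    case True
    then obtain q where "q \<in> V" "q \<notin> P a" "q \<notin> C t" by blast
    then have "c (Suc t) \<notin> C t" using dirty_next[OF assms(1) a] by blast
    then have "C t \<subset> C (Suc t)" using CSuc by auto
    moreover have "C (Suc t) \<subseteq> C (Suc (Suc t))" using C_mono by simp
    ultimately show ?thesis using fin psubset_card_mono by (meson less_le_trans card_mono)
  next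
    case False
    obtain q where q: "q \<in> V" "q \<notin> C t" using assms(2) by blast
    then have qa: "q \<in> P a" using False by blast
    obtain z where z: "z = c (Suc t)" by simp
    have zz: "z \<in> V" "z \<notin> P a" using next_other[OF assms(1) a] z by auto
    then obtain b where b: "b < k" "z \<in> P b" using part_of by blast
    have "q \<notin> P b" using qa b zz a part_uniq by metis
    moreover have "q \<notin> C (Suc t)" using CSuc q zz qa z by auto
    ultimately have "c (Suc (Suc t)) \<notin> C (Suc t)" using dirty_next[of "Suc t" b q] b z q by simp
    then have "C (Suc t) \<subset> C (Suc (Suc t))" using CSuc by auto
    moreover have "C t \<subseteq> C (Suc t)" using C_mono by simp
    ultimately show ?thesis using fin psubset_card_mono by (meson le_less_trans card_mono)
  qed
qed

lemma terminates: "\<exists>T. V \<subseteq> C T"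
proof -
  have "V \<subseteq> C (1 + 2*m) \<or> m + 1 \<le> card (C (1 + 2*m))" for m
  proof (induction m)
    case 0
    then show ?case using CSuc[of 0] C0 by simp
  next
    case (Suc m)
    have e: "1 + 2 * Suc m = Suc (Suc (1 + 2*m))" by simp
    show ?case
    proof (cases "V \<subseteq> C (1 + 2*m)")
      case True
      then show ?thesis using C_mono[of "1+2*m" "1 + 2 * Suc m"] by auto
    next
      case False
      then show ?thesis using Suc progress[of "1+2*m"] e by auto
    qed
  qed
  from this[of n] have "V \<subseteq> C (1+2*n) \<or> n + 1 \<le> card (C (1+2*n))" .
  moreover have "card (C (1+2*n)) \<le> n" using C_sub finV card_mono by blast
  ultimately show ?thesis by auto
qed

definition "sg Vi v = (if v \<in> Vi then 1 else -1::int)"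
definition "F Vi D b r = (\<Sum>v\<in>D. if r < w0 v then sg Vi v else 0) + (if b \<and> r < - int n then 1 else (0::int))"

lemma step:
  assumes D: "D \<subseteq> V" and z: "z \<in> D" and bz: "b \<longrightarrow> z \<notin> Vi"
    and dy: "\<forall>y\<in>D. w0 y < w0 z \<longrightarrow> (y \<in> Vi \<longleftrightarrow> b)"
  shows "\<exists>r'. F Vi (D - {z}) (z \<in> Vi) r \<le> F Vi D b r'"
proof -
  have finD: "finite D" using D finV finite_subset by blast
  let ?g = "\<lambda>r v. if r < w0 v then sg Vi v else 0"
  have rem: "sum (?g r') D = ?g r' z + sum (?g r') (D - {z})" for r'
    using sum.remove[OF finD z, of "?g r'"] by simp
  have zr: "- int n \<le> w0 z" using w0_range z D by auto
  have neq: "v \<in> D - {z} \<Longrightarrow> w0 v \<noteq> w0 z" for v using injw0 D z inj_onD[OF injw0] by blast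
  show ?thesis
  proof (cases "r < w0 z")
    case False
    then have "F Vi (D - {z}) (z \<in> Vi) r \<le> F Vi D b r"
      unfolding F_def using rem[of r] zr by auto
    then show ?thesis by blast
  next
    case lt: True
    show ?thesis
    proof (cases "z \<in> Vi")
      case True
      then have "F Vi (D - {z}) (z \<in> Vi) r \<le> F Vi D b r"
        unfolding F_def using rem[of r] lt bz by (auto simp: sg_def)
      then show ?thesis by blast
    next
      case zn: False
      show ?thesis
      proof (cases b)
        case False
        have "sum (?g r) (D - {z}) \<le> sum (?g (w0 z)) (D - {z})"
        proof (rule sum_mono)
          fix v assume v: "v \<in> D - {z}"
          show "?g r v \<le> ?g (w0 z) v"
          proof (cases "w0 z < w0 v")
            case True then show ?thesis using lt by auto
          next
            case False
            then have "w0 v < w0 z" using neq[OF v] by auto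
            then have "v \<notin> Vi" using dy v \<open>\<not> b\<close> by auto
            then show ?thesis using False by (auto simp: sg_def)
          qed
        qed
        then have "F Vi (D - {z}) (z \<in> Vi) r \<le> F Vi D b (w0 z)"
          unfolding F_def using rem[of "w0 z"] zn zr by auto
        then show ?thesis by blast
      next
        case True
        have "sum (?g r) (D - {z}) \<le> sum (?g (- int n - 1)) (D - {z})"
        proof (rule sum_mono)
          fix v assume v: "v \<in> D - {z}"
          have vr: "- int n \<le> w0 v" using w0_range v D by auto
          show "?g r v \<le> ?g (- int n - 1) v"
          proof (cases "r < w0 v")
            case True then show ?thesis using vr by auto
          next
            case False
            then have "w0 v < w0 z" using lt by auto
            then have "v \<in> Vi" using dy v \<open>b\<close> by auto
            then show ?thesis using False vr by (auto simp: sg_def)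
          qed
        qed
        then have "F Vi (D - {z}) (z \<in> Vi) r \<le> F Vi D b (- int n - 1)"
          unfolding F_def using rem[of "- int n - 1"] zn zr True by (auto simp: sg_def)
        then show ?thesis by blast
      qed
    qed
  qed
qed

lemma base: "F Vi V False r \<le> int (m_val V w0 Vi)"
proof -
  define j where "j = nat (max 0 (min (int n) (-r-1)))"
  define S where "S = {v\<in>V. r < w0 v}"
  have jn: "j \<le> n" unfolding j_def by auto
  have S_eq: "S = {v\<in>V. - int j \<le> w0 v}"
  proof -
    have ij: "int j = max 0 (min (int n) (-r-1))" unfolding j_def by simp
    have "r < w0 v \<longleftrightarrow> - int j \<le> w0 v" if "v \<in> V" for v
      using w0_range[OF that] ij by linarith
    then show ?thesis unfolding S_def by blast
  qed
  have finS: "finite S" unfolding S_def using finV by auto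
  have imS: "w0 ` S = {- int j .. -1}"
  proof
    show "w0 ` S \<subseteq> {- int j .. -1}" unfolding S_eq using w0_range by auto
    show "{- int j .. -1} \<subseteq> w0 ` S"
    proof
      fix x assume x: "x \<in> {- int j .. -1}"
      then have "x \<in> w0 ` V" using imw0 jn by auto
      then obtain v where "v \<in> V" "w0 v = x" by auto
      then show "x \<in> w0 ` S" unfolding S_eq using x by auto
    qed
  qed
  have cS: "card S = j"
  proof -
    have "inj_on w0 S" unfolding S_def by (rule inj_on_subset[OF injw0]) auto
    then have "card S = card {- int j .. -1}" using imS card_image by metis
    then show ?thesis by simp
  qed
  have U: "(\<Union>i\<in>{1..j}. {v\<in>V. w0 v = - int i}) = S"
  proof
    show "(\<Union>i\<in>{1..j}. {v\<in>V. w0 v = - int i}) \<subseteq> S" unfolding S_eq by auto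
    show "S \<subseteq> (\<Union>i\<in>{1..j}. {v\<in>V. w0 v = - int i})"
    proof
      fix v assume v: "v \<in> S"
      then have "v \<in> V" "- int j \<le> w0 v" "w0 v \<le> -1" unfolding S_eq using w0_range by auto
      then show "v \<in> (\<Union>i\<in>{1..j}. {v\<in>V. w0 v = - int i})"
        by (intro UN_I[of "nat (- w0 v)"]) auto
    qed
  qed
  define a where "a = card (S \<inter> Vi)"
  have cD: "card (S - Vi) = j - a" "a \<le> j"
    using card_Int_Diff[OF finS, of Vi] cS a_def by auto
  have "F Vi V False r = (\<Sum>v\<in>S. sg Vi v)"
    unfolding F_def S_def by (simp add: sum.inter_filter[OF finV, symmetric])
  also have "\<dots> = (\<Sum>v\<in>S \<inter> Vi. sg Vi v) + (\<Sum>v\<in>S - Vi. sg Vi v)"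
    using sum.Int_Diff[OF finS] by blast
  also have "\<dots> = int a - int (j - a)" using cD by (simp add: sg_def a_def)
  finally have Fe: "F Vi V False r = int a - int (j - a)" .
  show ?thesis
  proof (cases "j \<le> 2 * a")
    case False
    then show ?thesis using Fe by simp
  next
    case True
    define X where "X = {x. \<exists>y. 2*y + x \<le> card V \<and>
       card ((\<Union>j\<in>{1..2*y+x}. {v\<in>V. w0 v = - int j}) \<inter> Vi) = y + x}"
    have mv: "m_val V w0 Vi = Max X" unfolding m_val_def X_def by simp
    have "2*(j-a) + (2*a - j) = j" "(j-a) + (2*a-j) = a" using True cD by auto
    then have "2*a - j \<in> X" unfolding X_def using U jn a_def by (intro CollectI exI[of _ "j-a"]) simp
    moreover have "finite X" by (rule finite_subset[of _ "{..n}"]) (unfold X_def, fastforce, simp)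
    ultimately have "2*a - j \<le> m_val V w0 Vi" using mv by simp
    then show ?thesis using Fe True cD by linarith
  qed
qed

lemma main:
  assumes i: "i < k"
  shows "surplus E V w0 (P i) \<le> m_val V w0 (P i)"
proof -
  define Vi where "Vi = P i"
  define M where "M = int (m_val V w0 Vi)"
  define T where "T = (LEAST t. V - Vi \<subseteq> C t)"
  have ex: "\<exists>t. V - Vi \<subseteq> C t" using terminates by blast
  have TT: "V - Vi \<subseteq> C T" unfolding T_def by (rule LeastI_ex[OF ex])
  have before: "t < T \<Longrightarrow> \<not> (V - Vi \<subseteq> C t)" for t unfolding T_def by (rule not_less_Least)
  have surp: "surplus E V w0 Vi = card (Vi - C T)"
    unfolding surplus_def T_def C_def Let_def by simp
  have ViV: "Vi \<subseteq> V" using P_sub i Vi_def by simp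
  show ?thesis
  proof (cases "card (Vi - C T) = 0")
    case True then show ?thesis using surp Vi_def by simp
  next
    case False
    then obtain yi where yi: "yi \<in> Vi" "yi \<notin> C T" by (metis Diff_iff all_not_in_conv card.empty)
    have Tpos: "T \<ge> 1"
    proof (rule ccontr)
      assume "\<not> 1 \<le> T" then have "T = 0" by simp
      then have "V \<subseteq> Vi" using TT C0 by auto
      then show False using other[OF i] Vi_def by auto
    qed
    have inv2: "t \<le> T \<Longrightarrow> \<forall>r. F Vi (V - C t) (1 \<le> t \<and> c t \<in> Vi) r \<le> M" for t
    proof (induction t)
      case 0
      then show ?case using base C0 M_def by simp
    next
      case (Suc t)
      then have tT: "t < T" by simp
      define D where "D = V - C t"
      define z where "z = c (Suc t)"
      define b where "b = (1 \<le> t \<and> c t \<in> Vi)"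
      have D': "D - {z} = V - C (Suc t)" unfolding D_def z_def CSuc by auto
      have yiD: "yi \<notin> C t" using yi C_mono[of t T] tT by auto
      have hyps: "z \<in> D \<and> (b \<longrightarrow> z \<notin> Vi) \<and> (\<forall>y\<in>D. w0 y < w0 z \<longrightarrow> (y \<in> Vi \<longleftrightarrow> b))"
      proof (cases "t = 0")
        case True
        then show ?thesis using c1 C0 w0_range unfolding D_def z_def b_def by fastforce
      next
        case False
        then have t1: "1 \<le> t" by simp
        then have "c t \<in> V" using inv[of t] by simp
        then obtain a where a: "a < k" "c t \<in> P a" using part_of by blast
        obtain yo where yo: "yo \<in> V" "yo \<notin> Vi" "yo \<notin> C t" using before[OF tT] by blast
        define q where "q = (if a = i then yo else yi)"
        have q: "q \<in> V" "q \<notin> P a" "q \<notin> C t"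
          unfolding q_def using yo yi yiD ViV Vi_def part_uniq[OF i a(1)] by auto
        have dn: "z \<in> V \<and> z \<notin> C t \<and> z \<notin> P a \<and> (\<forall>y\<in>V. y \<notin> C t \<longrightarrow> y \<notin> P a \<longrightarrow> w0 z \<le> w0 y)"
          using dirty_next[OF t1 a q] z_def by simp
        have bi: "b \<longleftrightarrow> a = i" unfolding b_def Vi_def using t1 a part_uniq[OF i a(1)] by auto
        have "y \<in> Vi \<longleftrightarrow> b" if "y \<in> D" "w0 y < w0 z" for y
        proof -
          have "y \<in> P a" using dn that unfolding D_def by force
          then show ?thesis using bi part_uniq[OF i a(1)] Vi_def by auto
        qed
        then show ?thesis using dn bi Vi_def D_def by auto
      qed
      show ?case
      proof
        fix r
        obtain r' where "F Vi (D - {z}) (z \<in> Vi) r \<le> F Vi D b r'"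
          using step[of D z b Vi r] hyps unfolding D_def by auto
        moreover have "F Vi D b r' \<le> M" using Suc.IH tT unfolding D_def b_def by simp
        ultimately show "F Vi (V - C (Suc t)) (1 \<le> Suc t \<and> c (Suc t) \<in> Vi) r \<le> M"
          using D' z_def by simp
      qed
    qed
    obtain T' where T': "T = Suc T'" using Tpos by (cases T) auto
    have cT: "c T \<notin> Vi"
    proof
      assume "c T \<in> Vi"
      then have "V - Vi \<subseteq> C T'" using TT T' CSuc by auto
      then show False using before[of T'] T' by simp
    qed
    have "F Vi (V - C T) (1 \<le> T \<and> c T \<in> Vi) (- int n - 1) \<le> M" using inv2 by simp
    moreover have "F Vi (V - C T) (1 \<le> T \<and> c T \<in> Vi) (- int n - 1) = int (card (Vi - C T))"
    proof -
      have e: "V - C T = Vi - C T" using TT ViV by auto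
      have "F Vi (V - C T) (1 \<le> T \<and> c T \<in> Vi) (- int n - 1) = (\<Sum>v\<in>Vi - C T. 1)"
      proof -
        have "(\<Sum>v\<in>Vi - C T. if - int n - 1 < w0 v then sg Vi v else 0) = (\<Sum>v\<in>Vi - C T. 1)"
          using w0_range ViV by (intro sum.cong) (auto simp: sg_def, smt (verit) subsetD)
        then show ?thesis unfolding F_def e using cT by simp
      qed
      then show ?thesis by simp
    qed
    ultimately show ?thesis using surp M_def Vi_def by simp
  qed
qed

end

theorem lemma1:
  fixes V :: "'a set" and P :: "nat \<Rightarrow> 'a set" and k :: nat and w0 :: "'a \<Rightarrow> int"
  assumes "finite V"
    and "k \<ge> 3"
    and "\<forall>i<k. P i \<noteq> {}"
    and "\<forall>i<k. \<forall>j<k. i \<noteq> j \<longrightarrow> P i \<inter> P j = {}"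
    and "(\<Union>i<k. P i) = V"
    and "bij_betw w0 V {- int (card V) .. -1}"
  shows "\<forall>i<k. surplus (kpartite_adj P k) V w0 (P i) \<le> m_val V w0 (P i)"
proof -
  interpret kp V P k w0 using assms by unfold_locales
  show ?thesis using main by blast
qed

end
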